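(* Let $d \ge 1$ and $r \ge 1$ be integers, and let $X \subset \mathbb{R}^d$ be a finite set of points with $\left\lceil \frac{|X|}{2} \right\rceil \ge r$. Then there is a partition of $X$ into $r$ sets $X_1, \ldots, X_r$ and an affine hyperplane $L \subset \mathbb{R}^d$ such that $L \cap \operatorname{conv} X_j \neq \emptyset$ for every $j \in \{1,\ldots,r\}$.
   Context: $\operatorname{conv}$ denotes the convex hull. This is the case $k=d-1$ of the statement: for integers $0 \le k < d$ and finite $X \subset \mathbb{R}^d$ with $\lceil |X|(k+1)/(d+k+1)\rceil \ge r$, there is a partition of $X$ into $r$ sets and a $k$-dimensional affine subspace meeting the convex hull of each part; for $k=d-1$ the ratio $(k+1)/(d+k+1)$ equals $1/2$. *)

theory Defs
  imports "HOL-Analysis.Analysis"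
begin

end

theory Submission
  imports Defs
begin

lemma seg_hit:
  fixes a u v :: "'a::euclidean_space"
  assumes "a \<bullet> u \<le> b" "b \<le> a \<bullet> v"
  shows "\<exists>z\<in>convex hull {u,v}. a \<bullet> z = b"
proof (cases "a \<bullet> u = a \<bullet> v")
  case True
  then have "a \<bullet> u = b" using assms by auto
  moreover have "u \<in> convex hull {u,v}" by (simp add: hull_inc)
  ultimately show ?thesis by blast
next
  case False
  then have lt: "a \<bullet> u < a \<bullet> v" using assms by auto
  define t where "t = (b - a \<bullet> u) / (a \<bullet> v - a \<bullet> u)"
  have t0: "0 \<le> t" and t1: "t \<le> 1" using assms lt by (auto simp: t_def field_simps)
  have "(1 - t) *\<^sub>R u + t *\<^sub>R v \<in> closed_segment u v"
    using t0 t1 unfolding closed_segment_def by blast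
  moreover have "a \<bullet> ((1 - t) *\<^sub>R u + t *\<^sub>R v) = a \<bullet> u + t * (a \<bullet> v - a \<bullet> u)"
    by (simp add: inner_add_right algebra_simps)
  moreover have "t * (a \<bullet> v - a \<bullet> u) = b - a \<bullet> u" using lt by (simp add: t_def)
  ultimately show ?thesis unfolding segment_convex_hull by (intro bexI[of _ "(1 - t) *\<^sub>R u + t *\<^sub>R v"]) auto
qed

lemma aux:
  fixes a :: "'a::euclidean_space"
  shows "finite X \<Longrightarrow> 2*r \<le> card X + 1 \<Longrightarrow> r \<ge> 1 \<Longrightarrow> \<exists>(P :: nat \<Rightarrow> 'a set) (b :: real).
           (\<forall>j\<in>{1..r}. P j \<noteq> {}) \<and>
           (\<forall>i\<in>{1..r}. \<forall>j\<in>{1..r}. i \<noteq> j \<longrightarrow> P i \<inter> P j = {}) \<and>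
           (\<Union>j\<in>{1..r}. P j) = X \<and>
           (\<forall>j\<in>{1..r}. {x. a \<bullet> x = b} \<inter> convex hull (P j) \<noteq> {})"
proof (induction r arbitrary: X)
  case 0
  then show ?case by simp
next
  case (Suc r)
  show ?case
  proof (cases "r = 0")
    case True
    from Suc.prems have "X \<noteq> {}" using True by auto
    then obtain x where x: "x \<in> X" by auto
    have "{y. a \<bullet> y = a \<bullet> x} \<inter> convex hull X \<noteq> {}"
      using x hull_subset by fastforce
    then show ?thesis using True \<open>X \<noteq> {}\<close>
      by (intro exI[of _ "\<lambda>_. X"] exI[of _ "a \<bullet> x"]) auto
  next
    case False
    have fin: "finite X" and cX: "2 * r + 1 \<le> card X" using Suc.prems by auto
    have "X \<noteq> {}" using cX by auto
    define f where "f = (\<lambda>x. a \<bullet> x)"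
    have "Min (f ` X) \<in> f ` X" using fin \<open>X \<noteq> {}\<close> by (intro Min_in) auto
    then obtain xmin where xmin: "xmin \<in> X" "f xmin = Min (f ` X)" by force
    have minle: "\<And>y. y \<in> X \<Longrightarrow> f xmin \<le> f y" using xmin fin by simp
    have "card (X - {xmin}) \<ge> 2" using cX xmin False by auto
    then have ne2: "X - {xmin} \<noteq> {}" by (intro notI) simp
    have "Max (f ` (X - {xmin})) \<in> f ` (X - {xmin})" using fin ne2 by (intro Max_in) auto
    then obtain xmax where xmax: "xmax \<in> X - {xmin}" "f xmax = Max (f ` (X - {xmin}))" by force
    have maxle: "\<And>y. y \<in> X - {xmin} \<Longrightarrow> f y \<le> f xmax" using xmax fin by simp
    define X' where "X' = X - {xmin, xmax}"
    have cX': "card X' = card X - 2" using xmin xmax fin unfolding X'_def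
      by (subst card_Diff_subset) auto
    have "finite X'" "2 * r \<le> card X' + 1" "r \<ge> 1" using cX cX' fin False X'_def by auto
    from Suc.IH[OF this] obtain P b where
      P1: "\<forall>j\<in>{1..r}. P j \<noteq> {}" and
      P2: "\<forall>i\<in>{1..r}. \<forall>j\<in>{1..r}. i \<noteq> j \<longrightarrow> P i \<inter> P j = {}" and
      P3: "(\<Union>j\<in>{1..r}. P j) = X'" and
      P4: "\<forall>j\<in>{1..r}. {x. a \<bullet> x = b} \<inter> convex hull (P j) \<noteq> {}" by blast
    have r1: "1 \<in> {1..r}" using False by auto
    obtain y where y: "y \<in> convex hull (P 1)" "a \<bullet> y = b" using P4 r1 by blast
    have sub: "P 1 \<subseteq> X'" using P3 r1 by blast
    have "P 1 \<subseteq> {x. f xmin \<le> a \<bullet> x}" using sub minle unfolding X'_def f_def by auto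
    then have "convex hull (P 1) \<subseteq> {x. f xmin \<le> a \<bullet> x}"
      by (intro hull_minimal) (auto simp: convex_halfspace_ge)
    then have lo: "a \<bullet> xmin \<le> b" using y f_def by auto
    have "P 1 \<subseteq> {x. a \<bullet> x \<le> f xmax}" using sub maxle unfolding X'_def f_def by auto
    then have "convex hull (P 1) \<subseteq> {x. a \<bullet> x \<le> f xmax}"
      by (intro hull_minimal) (auto simp: convex_halfspace_le)
    then have hi: "b \<le> a \<bullet> xmax" using y f_def by auto
    obtain z where z: "z \<in> convex hull {xmin, xmax}" "a \<bullet> z = b"
      using seg_hit[OF lo hi] by blast
    define Q where "Q = P(Suc r := {xmin, xmax})"
    have int: "{1..Suc r} = insert (Suc r) {1..r}" by auto
    have sub': "\<And>j. j \<in> {1..r} \<Longrightarrow> P j \<subseteq> X'" using P3 by blast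
    show ?thesis
    proof (intro exI[of _ Q] exI[of _ b] conjI)
      show "\<forall>j\<in>{1..Suc r}. Q j \<noteq> {}" using P1 by (auto simp: Q_def)
      show "\<forall>i\<in>{1..Suc r}. \<forall>j\<in>{1..Suc r}. i \<noteq> j \<longrightarrow> Q i \<inter> Q j = {}"
      proof (intro ballI impI)
        fix i j assume ij: "i \<in> {1..Suc r}" "j \<in> {1..Suc r}" "i \<noteq> j"
        show "Q i \<inter> Q j = {}"
        proof (cases "i = Suc r \<or> j = Suc r")
          case True
          then show ?thesis using ij sub'[of i] sub'[of j] unfolding Q_def X'_def
            by (auto simp: int)
        next
          case False
          then show ?thesis using ij P2 by (auto simp: Q_def)
        qed
      qed
      show "(\<Union>j\<in>{1..Suc r}. Q j) = X"
      proof -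
        have "(\<Union>j\<in>{1..Suc r}. Q j) = {xmin, xmax} \<union> (\<Union>j\<in>{1..r}. P j)"
          unfolding int Q_def by auto
        also have "\<dots> = X" using P3 xmin xmax unfolding X'_def by auto
        finally show ?thesis .
      qed
      show "\<forall>j\<in>{1..Suc r}. {x. a \<bullet> x = b} \<inter> convex hull (Q j) \<noteq> {}"
        using P4 z by (auto simp: Q_def int)
    qed
  qed
qed

theorem mainTheorem1:
  fixes X :: "'a::euclidean_space set" and r :: nat
  assumes "r \<ge> 1" and "finite X" and "\<lceil>real (card X) / 2\<rceil> \<ge> int r"
  shows "\<exists>(P :: nat \<Rightarrow> 'a set) (a :: 'a) (b :: real).
           (\<forall>j\<in>{1..r}. P j \<noteq> {}) \<and>
           (\<forall>i\<in>{1..r}. \<forall>j\<in>{1..r}. i \<noteq> j \<longrightarrow> P i \<inter> P j = {}) \<and>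
           (\<Union>j\<in>{1..r}. P j) = X \<and>
           a \<noteq> 0 \<and>
           (\<forall>j\<in>{1..r}. {x. a \<bullet> x = b} \<inter> convex hull (P j) \<noteq> {})"
proof -
  have "real r - 1 < real (card X) / 2" using assms(3) by (simp add: le_ceiling_iff)
  then have c: "2 * r \<le> card X + 1" by linarith
  obtain a :: 'a where a: "a \<in> Basis" using nonempty_Basis by blast
  then have "a \<noteq> 0" by auto
  from aux[OF assms(2) c assms(1), of a] \<open>a \<noteq> 0\<close> show ?thesis by blast
qed

end
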